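(* There is a constant $C$ such that for every two NFAs $A$ and $B$, each with at most $n$ states and over a common alphabet of $m$ input letters, there exist two DFAs $A'$ and $B'$ with at most $C n^2$ states and over an alphabet of at most $C(m+n)$ letters such that, for every $r\ge 1$, there is a tower of height $r$ between $L(A)$ and $L(B)$ if and only if there is a tower of height $r$ between $L(A')$ and $L(B')$. In particular, there is an infinite tower between $L(A)$ and $L(B)$ if and only if there is an infinite tower between $L(A')$ and $L(B')$.
   Context: For strings $v=a_1\cdots a_k$ and $w$, $v\preccurlyeq w$ if $w\in\Sigma^*a_1\Sigma^*a_2\Sigma^*\cdots\Sigma^*a_k\Sigma^*$. A sequence $(w_i)_{i=1}^r$ of strings is a tower between languages $K$ and $L$ if $w_1\in K\cup L$ and for all $i=1,\dots,r-1$: $w_i\preccurlyeq w_{i+1}$, $w_i\in K$ implies $w_{i+1}\in L$, and $w_i\in L$ implies $w_{i+1}\in K$; $r$ is its height. An infinite tower is an infinite sequence with the same properties. *)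

theory Defs
  imports Main "HOL-Library.Sublist"
begin

record ('q, 'a) nfa =
  nfa_states :: "'q set"
  nfa_alph   :: "'a set"
  nfa_delta  :: "'q \<Rightarrow> 'a \<Rightarrow> 'q set"
  nfa_init   :: "'q set"
  nfa_final  :: "'q set"

definition nfa_wf :: "('q, 'a) nfa \<Rightarrow> bool" where
  "nfa_wf A \<longleftrightarrow> finite (nfa_states A) \<and> nfa_states A \<noteq> {} \<and> finite (nfa_alph A)
     \<and> nfa_init A \<subseteq> nfa_states A \<and> nfa_final A \<subseteq> nfa_states A
     \<and> (\<forall>q \<in> nfa_states A. \<forall>a \<in> nfa_alph A. nfa_delta A q a \<subseteq> nfa_states A)"

fun nfa_steps :: "('q, 'a) nfa \<Rightarrow> 'q set \<Rightarrow> 'a list \<Rightarrow> 'q set" where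
  "nfa_steps A S [] = S"
| "nfa_steps A S (a # w) = nfa_steps A (\<Union>q \<in> S. nfa_delta A q a) w"

definition nfa_lang :: "('q, 'a) nfa \<Rightarrow> 'a list set" where
  "nfa_lang A = {w \<in> lists (nfa_alph A). nfa_steps A (nfa_init A) w \<inter> nfa_final A \<noteq> {}}"

record ('q, 'a) dfa =
  dfa_states :: "'q set"
  dfa_alph   :: "'a set"
  dfa_delta  :: "'q \<Rightarrow> 'a \<Rightarrow> 'q"
  dfa_init   :: "'q"
  dfa_final  :: "'q set"

definition dfa_wf :: "('q, 'a) dfa \<Rightarrow> bool" where
  "dfa_wf A \<longleftrightarrow> finite (dfa_states A) \<and> finite (dfa_alph A)
     \<and> dfa_init A \<in> dfa_states A \<and> dfa_final A \<subseteq> dfa_states A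
     \<and> (\<forall>q \<in> dfa_states A. \<forall>a \<in> dfa_alph A. dfa_delta A q a \<in> dfa_states A)"

fun dfa_steps :: "('q, 'a) dfa \<Rightarrow> 'q \<Rightarrow> 'a list \<Rightarrow> 'q" where
  "dfa_steps A q [] = q"
| "dfa_steps A q (a # w) = dfa_steps A (dfa_delta A q a) w"

definition dfa_lang :: "('q, 'a) dfa \<Rightarrow> 'a list set" where
  "dfa_lang A = {w \<in> lists (dfa_alph A). dfa_steps A (dfa_init A) w \<in> dfa_final A}"

text \<open>Towers. The subsequence (scattered subword) order is the library's subseq.
  A finite tower w_1,...,w_r is a list of length r (its height).\<close>
definition is_tower :: "'a list set \<Rightarrow> 'a list set \<Rightarrow> 'a list list \<Rightarrow> bool" where
  "is_tower K L ws \<longleftrightarrow> ws \<noteq> [] \<and> ws ! 0 \<in> K \<union> L \<and>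
     (\<forall>i. Suc i < length ws \<longrightarrow>
        subseq (ws ! i) (ws ! Suc i) \<and>
        (ws ! i \<in> K \<longrightarrow> ws ! Suc i \<in> L) \<and>
        (ws ! i \<in> L \<longrightarrow> ws ! Suc i \<in> K))"

definition is_inf_tower :: "'a list set \<Rightarrow> 'a list set \<Rightarrow> (nat \<Rightarrow> 'a list) \<Rightarrow> bool" where
  "is_inf_tower K L f \<longleftrightarrow> f 0 \<in> K \<union> L \<and>
     (\<forall>i. subseq (f i) (f (Suc i)) \<and>
        (f i \<in> K \<longrightarrow> f (Suc i) \<in> L) \<and>
        (f i \<in> L \<longrightarrow> f (Suc i) \<in> K))"

end

theory Submission imports Defs "HOL-Library.Countable" begin


datatype st = Dead | Cur "nat option" | Pend "nat option" nat
instance st :: countable by countable_datatype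

fun conf :: "st \<Rightarrow> nat option" where
  "conf Dead = None" | "conf (Cur oo) = oo" | "conf (Pend oo q) = oo"

definition Sset :: "(nat,nat) nfa \<Rightarrow> nat option \<Rightarrow> nat set" where
  "Sset N oo = (case oo of None \<Rightarrow> nfa_init N | Some p \<Rightarrow> {p})"

definition stepo :: "(nat,nat) nfa \<Rightarrow> nat option \<Rightarrow> nat \<Rightarrow> nat set" where
  "stepo N oo a = (\<Union>p\<in>Sset N oo. nfa_delta N p a)"

definition dstep :: "(nat,nat) nfa \<Rightarrow> nat \<Rightarrow> st \<Rightarrow> nat \<Rightarrow> st" where
"dstep N k s x = (case s of Dead \<Rightarrow> Dead
  | Cur oo \<Rightarrow> (if x mod 3 = 0 then Dead else if x mod 3 = k then Pend oo (x div 3) else Cur oo)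
  | Pend oo q \<Rightarrow> (if x mod 3 = 0 then (if q \<in> stepo N oo (x div 3) then Cur (Some q) else Dead)
       else if x mod 3 = k then Pend oo (x div 3) else Pend oo q))"

fun dsteps :: "(nat,nat) nfa \<Rightarrow> nat \<Rightarrow> st \<Rightarrow> nat list \<Rightarrow> st" where
  "dsteps N k s [] = s" | "dsteps N k s (x#w) = dsteps N k (dstep N k s x) w"

definition St :: "(nat,nat) nfa \<Rightarrow> st set" where
"St N = {Dead, Cur None} \<union> (\<lambda>p. Cur (Some p)) ` nfa_states N
   \<union> (\<lambda>(oo,q). Pend oo q) ` (insert None (Some ` nfa_states N) \<times> nfa_states N)"

definition Fin :: "(nat,nat) nfa \<Rightarrow> st set" where
  "Fin N = {s \<in> St N. s \<noteq> Dead \<and> Sset N (conf s) \<inter> nfa_final N \<noteq> {}}"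

definition mk :: "(nat,nat) nfa \<Rightarrow> nat \<Rightarrow> nat set \<Rightarrow> (nat,nat) dfa" where
"mk N k S = \<lparr>dfa_states = to_nat ` St N, dfa_alph = S,
   dfa_delta = (\<lambda>q x. to_nat (dstep N k (from_nat q) x)), dfa_init = to_nat (Cur None),
   dfa_final = to_nat ` Fin N\<rparr>"

definition hh :: "nat list \<Rightarrow> nat list" where
  "hh u = map (\<lambda>x. x div 3) (filter (\<lambda>x. x mod 3 = 0) u)"

lemma hh_simps[simp]: "hh [] = []" "hh (x#u) = (if x mod 3 = 0 then x div 3 # hh u else hh u)"
  "hh (u@v) = hh u @ hh v"
  by (simp_all add: hh_def)

lemma dfa_steps_mk: "dfa_steps (mk N k S) (to_nat s) w = to_nat (dsteps N k s w)"
  by (induction w arbitrary: s) (simp_all add: mk_def)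

lemma mk_lang: "w \<in> dfa_lang (mk N k S) \<longleftrightarrow> w \<in> lists S \<and> dsteps N k (Cur None) w \<in> Fin N"
proof -
  have "dfa_steps (mk N k S) (dfa_init (mk N k S)) w = to_nat (dsteps N k (Cur None) w)"
    using dfa_steps_mk[of N k S "Cur None" w] by (simp add: mk_def)
  then show ?thesis unfolding dfa_lang_def by (simp add: mk_def inj_image_mem_iff)
qed

lemma dstep_closed:
  assumes "s \<in> St N" "x \<in> S" "\<forall>x\<in>S. x mod 3 = k \<longrightarrow> x div 3 \<in> nfa_states N"
  shows "dstep N k s x \<in> St N"
  using assms unfolding St_def dstep_def by (auto split: st.splits)

lemma dsteps_closed:
  assumes "s \<in> St N" "w \<in> lists S" "\<forall>x\<in>S. x mod 3 = k \<longrightarrow> x div 3 \<in> nfa_states N"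
  shows "dsteps N k s w \<in> St N"
  using assms by (induction w arbitrary: s) (auto intro: dstep_closed)

lemma mk_wf:
  assumes "nfa_wf N" "finite S" "\<forall>x\<in>S. x mod 3 = k \<longrightarrow> x div 3 \<in> nfa_states N"
  shows "dfa_wf (mk N k S)"
proof -
  have "finite (St N)" using assms(1) unfolding St_def nfa_wf_def by auto
  moreover have "Cur None \<in> St N" by (simp add: St_def)
  moreover have "Fin N \<subseteq> St N" by (auto simp: Fin_def)
  ultimately show ?thesis using assms dstep_closed[where S=S and k=k and N=N]
    unfolding dfa_wf_def mk_def by auto
qed

lemma card_St: "finite (nfa_states N) \<Longrightarrow> card (St N) \<le> 2 + card (nfa_states N) + (Suc (card (nfa_states N))) * card (nfa_states N)"
proof -
  let ?Q = "nfa_states N"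
  assume f: "finite ?Q"
  have "card (St N) \<le> card ({Dead, Cur None} \<union> (\<lambda>p. Cur (Some p)) ` ?Q)
     + card ((\<lambda>(oo,q). Pend oo q) ` (insert None (Some ` ?Q) \<times> ?Q))"
    unfolding St_def by (rule card_Un_le)
  also have "card ({Dead, Cur None} \<union> (\<lambda>p. Cur (Some p)) ` ?Q) \<le> card {Dead, Cur None} + card ((\<lambda>p. Cur (Some p)) ` ?Q)"
    by (rule card_Un_le)
  also have "card {Dead, Cur None} \<le> 2" by (simp add: card_insert_le_m1)
  also have "card ((\<lambda>p. Cur (Some p)) ` ?Q) \<le> card ?Q" by (rule card_image_le[OF f])
  also have "card ((\<lambda>(oo,q). Pend oo q) ` (insert None (Some ` ?Q) \<times> ?Q)) \<le> card (insert None (Some ` ?Q) \<times> ?Q)"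
    using f by (intro card_image_le) auto
  also have "\<dots> = card (insert None (Some ` ?Q)) * card ?Q" by (rule card_cartesian_product)
  also have "card (insert None (Some ` ?Q)) \<le> Suc (card ?Q)"
    using f by (simp add: card_insert_if card_image)
  finally show ?thesis by simp
qed

lemma nfa_steps_app: "nfa_steps N S (u@v) = nfa_steps N (nfa_steps N S u) v"
  by (induction u arbitrary: S) auto

lemma nfa_steps_mono: "S \<subseteq> T \<Longrightarrow> nfa_steps N S w \<subseteq> nfa_steps N T w"
proof (induction w arbitrary: S T)
  case (Cons a w)
  have "(\<Union>q\<in>S. nfa_delta N q a) \<subseteq> (\<Union>q\<in>T. nfa_delta N q a)" using Cons.prems by auto
  then show ?case using Cons.IH by simp
qed simp

lemma nfa_steps_UN: "nfa_steps N S w = (\<Union>p\<in>S. nfa_steps N {p} w)"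
proof (induction w arbitrary: S)
  case (Cons a w)
  show ?case by (simp add: Cons.IH[of "\<Union>q\<in>S. nfa_delta N q a"] Cons.IH[of "nfa_delta N _ a"])
qed simp

lemma dsteps_Dead[simp]: "dsteps N k Dead w = Dead"
  by (induction w) (simp_all add: dstep_def)

lemma dstep_sound:
  assumes "dstep N k s x \<noteq> Dead" "s \<noteq> Dead"
  shows "Sset N (conf (dstep N k s x)) \<subseteq> nfa_steps N (Sset N (conf s)) (hh [x])"
  using assms by (cases s) (auto simp: dstep_def stepo_def Sset_def split: if_splits)

lemma dsteps_sound:
  assumes "dsteps N k s u \<noteq> Dead" "s \<noteq> Dead"
  shows "Sset N (conf (dsteps N k s u)) \<subseteq> nfa_steps N (Sset N (conf s)) (hh u)"
  using assms
proof (induction u arbitrary: s)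
  case (Cons x u)
  have d: "dstep N k s x \<noteq> Dead" using Cons.prems(1) by (metis dsteps.simps(2) dsteps_Dead)
  have "Sset N (conf (dsteps N k s (x#u))) \<subseteq> nfa_steps N (Sset N (conf (dstep N k s x))) (hh u)"
    using Cons.IH[of "dstep N k s x"] Cons.prems d by simp
  also have "\<dots> \<subseteq> nfa_steps N (nfa_steps N (Sset N (conf s)) (hh [x])) (hh u)"
    by (rule nfa_steps_mono[OF dstep_sound[OF d Cons.prems(2)]])
  also have "\<dots> = nfa_steps N (Sset N (conf s)) (hh (x#u))"
    using nfa_steps_app[of N _ "hh [x]" "hh u"] hh_simps(3)[of "[x]" u] by simp
  finally show ?case .
qed simp

lemma hh_lists: "u \<in> lists S \<Longrightarrow> \<forall>x\<in>S. x mod 3 = 0 \<longrightarrow> x div 3 \<in> T \<Longrightarrow> hh u \<in> lists T"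
  by (induction u) auto

lemma sound:
  assumes "u \<in> dfa_lang (mk N k S)" "\<forall>x\<in>S. x mod 3 = 0 \<longrightarrow> x div 3 \<in> nfa_alph N"
  shows "hh u \<in> nfa_lang N"
proof -
  from assms(1) have u: "u \<in> lists S" and f: "dsteps N k (Cur None) u \<in> Fin N" by (auto simp: mk_lang)
  from f have nd: "dsteps N k (Cur None) u \<noteq> Dead" and
    fi: "Sset N (conf (dsteps N k (Cur None) u)) \<inter> nfa_final N \<noteq> {}" by (auto simp: Fin_def)
  have "Sset N (conf (dsteps N k (Cur None) u)) \<subseteq> nfa_steps N (nfa_init N) (hh u)"
    using dsteps_sound[OF nd] by (simp add: Sset_def)
  with fi have "nfa_steps N (nfa_init N) (hh u) \<inter> nfa_final N \<noteq> {}" by blast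
  moreover have "hh u \<in> lists (nfa_alph N)" by (rule hh_lists[OF u assms(2)])
  ultimately show ?thesis by (simp add: nfa_lang_def)
qed

fun run :: "(nat,nat) nfa \<Rightarrow> nat option \<Rightarrow> nat list \<Rightarrow> nat list \<Rightarrow> bool" where
  "run N oo [] rs = (rs = [])"
| "run N oo (a#w) rs = (case rs of [] \<Rightarrow> False | r#rs' \<Rightarrow> r \<in> stepo N oo a \<and> run N (Some r) w rs')"

lemma run_length: "run N oo w rs \<Longrightarrow> length rs = length w"
  by (induction w arbitrary: oo rs) (auto split: list.splits)

lemma run_exists: "q \<in> nfa_steps N (Sset N oo) w \<Longrightarrow>
   \<exists>rs. run N oo w rs \<and> q \<in> Sset N (last (oo # map Some rs))"
proof (induction w arbitrary: oo)
  case Nil then show ?case by simp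
next
  case (Cons a w)
  have "q \<in> nfa_steps N (stepo N oo a) w" using Cons.prems by (simp add: stepo_def)
  then obtain r where r: "r \<in> stepo N oo a" "q \<in> nfa_steps N {r} w"
    using nfa_steps_UN[of N "stepo N oo a" w] by auto
  then have "q \<in> nfa_steps N (Sset N (Some r)) w" by (simp add: Sset_def)
  from Cons.IH[OF this] obtain rs where "run N (Some r) w rs" "q \<in> Sset N (last (Some r # map Some rs))"
    by blast
  then show ?case using r by (intro exI[of _ "r#rs"]) simp
qed

lemma run_states: "run N oo w rs \<Longrightarrow> nfa_wf N \<Longrightarrow> w \<in> lists (nfa_alph N) \<Longrightarrow>
   (\<forall>p. oo = Some p \<longrightarrow> p \<in> nfa_states N) \<Longrightarrow> set rs \<subseteq> nfa_states N"
proof (induction w arbitrary: oo rs)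
  case (Cons a w)
  then obtain r rs' where rs: "rs = r # rs'" "r \<in> stepo N oo a" "run N (Some r) w rs'"
    by (auto split: list.splits)
  have ss: "Sset N oo \<subseteq> nfa_states N" using Cons.prems(2,4)
    by (auto simp: Sset_def nfa_wf_def split: option.splits)
  obtain p where p: "p \<in> Sset N oo" "r \<in> nfa_delta N p a" using rs(2) unfolding stepo_def by blast
  have a: "a \<in> nfa_alph N" using Cons.prems(3) by simp
  have "nfa_delta N p a \<subseteq> nfa_states N" using Cons.prems(2) p(1) ss a unfolding nfa_wf_def by blast
  then have "r \<in> nfa_states N" using p(2) by blast
  then show ?case using Cons.IH[OF rs(3)] Cons.prems rs by auto
qed simp

fun ins :: "(nat \<times> nat) list \<Rightarrow> nat list \<Rightarrow> nat list" where
  "ins ps [] = []"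
| "ins ps (x#v) = (if x mod 3 = 0 then (case ps of [] \<Rightarrow> x # ins [] v | p#ps' \<Rightarrow> fst p # snd p # x # ins ps' v)
     else x # ins ps v)"

lemma subseq_help: "subseq xs ys \<Longrightarrow> subseq (x#xs) (a#b#x#ys)"
  by (simp add: list_emb_Cons)

lemma ins_subseq: "subseq v (ins ps v)"
proof (induction ps v rule: ins.induct)
  case (2 ps x v)
  show ?case
  proof (cases "x mod 3 = 0")
    case True
    show ?thesis
    proof (cases ps)
      case Nil then show ?thesis using 2 True by (simp del: subseq_Cons2_iff add: list_emb_Cons2)
    next
      case (Cons p ps')
      then show ?thesis using 2 True
        by (simp del: subseq_Cons2_iff list_emb_Cons_iff1 list_emb_Cons_iff2 add: subseq_help)
    qed
  next
    case False then show ?thesis using 2 by (simp del: subseq_Cons2_iff add: list_emb_Cons2)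
  qed
qed simp

lemma ins_hh: "\<forall>p\<in>set ps. fst p mod 3 \<noteq> 0 \<and> snd p mod 3 \<noteq> 0 \<Longrightarrow> hh (ins ps v) = hh v"
  by (induction ps v rule: ins.induct) (auto split: list.splits)

lemma ins_lists: "v \<in> lists S \<Longrightarrow> \<forall>p\<in>set ps. fst p \<in> S \<and> snd p \<in> S \<Longrightarrow> ins ps v \<in> lists S"
  by (induction ps v rule: ins.induct) (auto split: list.splits)

definition good :: "(nat,nat) nfa \<Rightarrow> nat \<Rightarrow> nat \<times> nat \<Rightarrow> nat \<Rightarrow> bool" where
  "good N k p r = (\<forall>s. s \<noteq> Dead \<longrightarrow> dstep N k (dstep N k s (fst p)) (snd p) = Pend (conf s) r)"

lemma dsteps_ins:
  assumes "s \<noteq> Dead" "list_all2 (good N k) ps rs" "run N (conf s) (hh v) rs"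
  shows "dsteps N k s (ins ps v) \<noteq> Dead \<and> conf (dsteps N k s (ins ps v)) = last (conf s # map Some rs)"
  using assms
proof (induction v arbitrary: s ps rs)
  case Nil then show ?case by simp
next
  case (Cons x v)
  show ?case
  proof (cases "x mod 3 = 0")
    case True
    then obtain r rs' where rs: "rs = r # rs'" "r \<in> stepo N (conf s) (x div 3)" "run N (Some r) (hh v) rs'"
      using Cons.prems(3) by (auto split: list.splits)
    then obtain p ps' where ps: "ps = p # ps'" "good N k p r" "list_all2 (good N k) ps' rs'"
      using Cons.prems(2) by (auto simp: list_all2_Cons2)
    have "dstep N k (dstep N k s (fst p)) (snd p) = Pend (conf s) r"
      using ps(2) Cons.prems(1) by (simp add: good_def)
    then have e: "dsteps N k s (ins ps (x#v)) = dsteps N k (Cur (Some r)) (ins ps' v)"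
      using True ps(1) rs(2) by (simp add: dstep_def)
    show ?thesis using Cons.IH[of "Cur (Some r)" ps' rs'] ps rs e by simp
  next
    case False
    have nd: "dstep N k s x \<noteq> Dead" "conf (dstep N k s x) = conf s"
      using False Cons.prems(1) by (cases s; simp add: dstep_def)+
    have e: "dsteps N k s (ins ps (x#v)) = dsteps N k (dstep N k s x) (ins ps v)" using False by simp
    show ?thesis using Cons.IH[of "dstep N k s x" ps rs] Cons.prems nd e False by simp
  qed
qed

lemma hh_map3: "hh (map (\<lambda>a. 3*a) w) = w"
  by (induction w) auto

lemma lift_v: "subseq (hh u) w \<Longrightarrow> u \<in> lists S \<Longrightarrow> (\<forall>a\<in>set w. 3*a \<in> S) \<Longrightarrow>
   \<exists>v\<in>lists S. subseq u v \<and> hh v = w"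
proof (induction u arbitrary: w)
  case Nil
  have "map (\<lambda>a. 3*a) w \<in> lists S" using Nil.prems(3) by auto
  then show ?case by (intro bexI[of _ "map (\<lambda>a. 3*a) w"]) (simp_all add: hh_map3)
next
  case (Cons x u)
  have xS: "x \<in> S" and uS: "u \<in> lists S" using Cons.prems(2) by auto
  show ?case
  proof (cases "x mod 3 = 0")
    case False
    then have "subseq (hh u) w" using Cons.prems(1) by simp
    from Cons.IH[OF this uS Cons.prems(3)] obtain v where v: "v \<in> lists S" "subseq u v" "hh v = w"
      by blast
    have "x # v \<in> lists S" using v(1) xS by simp
    moreover have "subseq (x#u) (x#v)" using v(2) by simp
    moreover have "hh (x#v) = w" using v(3) False by simp
    ultimately show ?thesis by blast
  next
    case True
    then have "subseq (x div 3 # hh u) w" using Cons.prems by simp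
    from list_emb_ConsD[OF this] obtain us c vs where w: "w = us @ c # vs" "x div 3 = c" "subseq (hh u) vs"
      by blast
    have "\<forall>a\<in>set vs. 3*a \<in> S" using Cons.prems(3) w(1) by simp
    from Cons.IH[OF w(3) uS this] obtain v2 where v2: "v2 \<in> lists S" "subseq u v2" "hh v2 = vs"
      by blast
    have x: "x = 3 * c" using True w(2) by auto
    let ?v = "map (\<lambda>a. 3*a) us @ x # v2"
    have "subseq (x#u) (x # v2)" using v2(2) by simp
    then have "subseq (x#u) ?v" by (rule subseq_drop_many)
    moreover have "hh ?v = w" using w(1) v2(3) x by (simp add: hh_map3)
    moreover have "map (\<lambda>a. 3*a) us \<in> lists S" using Cons.prems(3) w(1) by auto
    then have "?v \<in> lists S" using v2(1) xS by simp
    ultimately show ?thesis by blast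
  qed
qed

lemma choose_run:
  assumes "nfa_wf N" "w \<in> lists (nfa_alph N)"
  shows "\<exists>ra. length ra = length w \<and> set ra \<subseteq> nfa_states N \<and>
     (w \<in> nfa_lang N \<longrightarrow> run N None w ra \<and> Sset N (last (None # map Some ra)) \<inter> nfa_final N \<noteq> {})"
proof (cases "w \<in> nfa_lang N")
  case True
  then obtain q where q: "q \<in> nfa_steps N (Sset N None) w" "q \<in> nfa_final N"
    by (auto simp: nfa_lang_def Sset_def)
  from run_exists[OF q(1)] obtain rs where rs: "run N None w rs" "q \<in> Sset N (last (None # map Some rs))"
    by blast
  have "set rs \<subseteq> nfa_states N" using run_states[OF rs(1) assms] by simp
  then show ?thesis using rs q run_length[OF rs(1)] by (intro exI[of _ rs]) auto
next
  case False
  obtain q0 where "q0 \<in> nfa_states N" using assms(1) unfolding nfa_wf_def by auto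
  then show ?thesis using False by (intro exI[of _ "replicate (length w) q0"]) auto
qed

lemma la2a: "length ra = length rb \<Longrightarrow> (\<forall>x y. P (f x, g y) x) \<Longrightarrow>
   list_all2 P (zip (map f ra) (map g rb)) ra"
proof (induction ra arbitrary: rb)
  case (Cons a ra)
  then obtain b rb' where "rb = b # rb'" by (cases rb) auto
  then show ?case using Cons by auto
qed simp

lemma la2b: "length ra = length rb \<Longrightarrow> (\<forall>x y. P (f x, g y) y) \<Longrightarrow>
   list_all2 P (zip (map f ra) (map g rb)) rb"
proof (induction ra arbitrary: rb)
  case (Cons a ra)
  then obtain b rb' where "rb = b # rb'" by (cases rb) auto
  then show ?case using Cons by auto
qed simp

lemma m3: "(3*x+1) mod 3 = (1::nat)" "(3*x+1) div 3 = (x::nat)" "(3*x+2) mod 3 = (2::nat)" "(3*x+2) div 3 = (x::nat)"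
  by presburger+

lemma good1: "good N 1 (3*x+1, 3*y+2) x"
proof -
  note m = m3[of x] m3[of y]
  show ?thesis unfolding good_def
    by (intro allI impI, case_tac s) (simp_all only: m dstep_def st.case fst_conv snd_conv if_True if_False, simp_all)
qed

lemma good2: "good N 2 (3*x+1, 3*y+2) y"
proof -
  note m = m3[of x] m3[of y]
  show ?thesis unfolding good_def
    by (intro allI impI, case_tac s) (simp_all only: m dstep_def st.case fst_conv snd_conv if_True if_False, simp_all)
qed

lemma accept_ins:
  assumes "v \<in> lists S" "hh v = w" "list_all2 (good N k) ps ra" "\<forall>p\<in>set ps. fst p \<in> S \<and> snd p \<in> S"
    "run N None w ra" "Sset N (last (None # map Some ra)) \<inter> nfa_final N \<noteq> {}"
    "\<forall>x\<in>S. x mod 3 = k \<longrightarrow> x div 3 \<in> nfa_states N"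
  shows "ins ps v \<in> dfa_lang (mk N k S)"
proof -
  have l: "ins ps v \<in> lists S" by (rule ins_lists[OF assms(1,4)])
  have d: "dsteps N k (Cur None) (ins ps v) \<noteq> Dead \<and> conf (dsteps N k (Cur None) (ins ps v)) = last (None # map Some ra)"
    using dsteps_ins[of "Cur None" N k ps ra v] assms by simp
  have "dsteps N k (Cur None) (ins ps v) \<in> St N"
    by (rule dsteps_closed[OF _ l assms(7)]) (simp add: St_def)
  then show ?thesis using d assms(6) l by (simp add: mk_lang Fin_def)
qed



lemma tower_mem: "is_tower K L ws \<Longrightarrow> i < length ws \<Longrightarrow> ws!i \<in> K \<union> L"
  by (induction i) (auto simp: is_tower_def)

lemma inf_mem: "is_inf_tower K L f \<Longrightarrow> f i \<in> K \<union> L"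
  by (induction i) (auto simp: is_inf_tower_def)

lemma lift_seq:
  assumes U0: "[] \<in> U" and h0: "h [] = []"
  and lift: "\<And>u w. u \<in> U \<Longrightarrow> w \<in> K \<union> L \<Longrightarrow> subseq (h u) w \<Longrightarrow>
     \<exists>u'. u' \<in> U \<and> subseq u u' \<and> h u' = w \<and> (w\<in>K \<longrightarrow> u'\<in>K') \<and> (w\<in>L \<longrightarrow> u'\<in>L')"
  and fm: "\<forall>i. f i \<in> K \<union> L" and fc: "\<forall>i. subseq (f i) (f (Suc i))"
  shows "\<exists>g. \<forall>i. h (g i) = f i \<and> (f i\<in>K \<longrightarrow> g i\<in>K') \<and> (f i\<in>L \<longrightarrow> g i\<in>L') \<and> subseq (g i) (g (Suc i))"
proof -
  define P where "P = (\<lambda>u w u'. u' \<in> U \<and> subseq u u' \<and> h u' = w \<and> (w\<in>K \<longrightarrow> u'\<in>K') \<and> (w\<in>L \<longrightarrow> u'\<in>L'))"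
  define lf where "lf = (\<lambda>u w. SOME u'. P u w u')"
  have lfP: "P u w (lf u w)" if "u \<in> U" "w \<in> K \<union> L" "subseq (h u) w" for u w
    unfolding lf_def by (rule someI_ex) (use lift[OF that] in \<open>simp add: P_def\<close>)
  define g where "g = rec_nat (lf [] (f 0)) (\<lambda>i u. lf u (f (Suc i)))"
  have g0: "g 0 = lf [] (f 0)" and gS: "\<And>i. g (Suc i) = lf (g i) (f (Suc i))" by (simp_all add: g_def)
  have inv: "g i \<in> U \<and> h (g i) = f i \<and> (f i\<in>K \<longrightarrow> g i\<in>K') \<and> (f i\<in>L \<longrightarrow> g i\<in>L')" for i
  proof (induction i)
    case 0 show ?case using lfP[OF U0 fm[rule_format, of 0]] h0 by (simp add: g0 P_def)
  next
    case (Suc i)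
    then show ?case using lfP[of "g i" "f (Suc i)"] fm fc by (simp add: gS P_def)
  qed
  have "subseq (g i) (g (Suc i))" for i
    using lfP[of "g i" "f (Suc i)"] inv[of i] fm fc by (simp add: gS P_def)
  then show ?thesis using inv by blast
qed

lemma towers_abs:
  assumes sK: "\<And>u. u \<in> K' \<Longrightarrow> h u \<in> K" and sL: "\<And>u. u \<in> L' \<Longrightarrow> h u \<in> L"
  and mono: "\<And>u v. subseq u v \<Longrightarrow> subseq (h u) (h v)"
  and U0: "[] \<in> U" and h0: "h [] = []"
  and lift: "\<And>u w. u \<in> U \<Longrightarrow> w \<in> K \<union> L \<Longrightarrow> subseq (h u) w \<Longrightarrow>
     \<exists>u'. u' \<in> U \<and> subseq u u' \<and> h u' = w \<and> (w\<in>K \<longrightarrow> u'\<in>K') \<and> (w\<in>L \<longrightarrow> u'\<in>L')"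
  and KL: "K \<inter> L \<noteq> {} \<Longrightarrow> K' \<inter> L' \<noteq> {}"
  shows "\<forall>r\<ge>1. (\<exists>ws. is_tower K L ws \<and> length ws = r) \<longleftrightarrow> (\<exists>ws. is_tower K' L' ws \<and> length ws = r)"
    and "(\<exists>f. is_inf_tower K L f) \<longleftrightarrow> (\<exists>f. is_inf_tower K' L' f)"
proof -
  have const_t: "is_tower X Y (replicate r x)" if "x \<in> X \<inter> Y" "r \<ge> 1" for X Y x and r :: nat
    using that by (auto simp: is_tower_def)
  have const_i: "is_inf_tower X Y (\<lambda>i. x)" if "x \<in> X \<inter> Y" for X Y x
    using that by (auto simp: is_inf_tower_def)
  have up_inf: "is_inf_tower K' L' g" if "is_inf_tower K L f"
      "\<forall>i. h (g i) = f i \<and> (f i\<in>K \<longrightarrow> g i\<in>K') \<and> (f i\<in>L \<longrightarrow> g i\<in>L') \<and> subseq (g i) (g (Suc i))" for f g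
  proof -
    have "f 0 \<in> K \<union> L" using that(1) by (simp add: is_inf_tower_def)
    then have "g 0 \<in> K' \<union> L'" using that(2) by auto
    moreover have "g i \<in> K' \<longrightarrow> g (Suc i) \<in> L'" "g i \<in> L' \<longrightarrow> g (Suc i) \<in> K'" for i
    proof -
      have t: "f i \<in> K \<longrightarrow> f (Suc i) \<in> L" "f i \<in> L \<longrightarrow> f (Suc i) \<in> K"
        using that(1) unfolding is_inf_tower_def by blast+
      have gi: "h (g i) = f i" "f (Suc i) \<in> K \<longrightarrow> g (Suc i) \<in> K'" "f (Suc i) \<in> L \<longrightarrow> g (Suc i) \<in> L'"
        using that(2) by blast+
      show "g i \<in> K' \<longrightarrow> g (Suc i) \<in> L'" using t gi sK[of "g i"] by simp
      show "g i \<in> L' \<longrightarrow> g (Suc i) \<in> K'" using t gi sL[of "g i"] by simp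
    qed
    moreover have "subseq (g i) (g (Suc i))" for i using that(2) by blast
    ultimately show ?thesis by (simp add: is_inf_tower_def)
  qed
  have down_inf: "is_inf_tower K L (\<lambda>i. h (g i))" if "is_inf_tower K' L' g" "K \<inter> L = {}" for g
  proof -
    have gm: "g i \<in> K' \<union> L'" for i by (rule inf_mem[OF that(1)])
    have a: "g i \<in> K'" if "h (g i) \<in> K" for i
      using gm[of i] sL[of "g i"] \<open>K \<inter> L = {}\<close> that by blast
    have b: "g i \<in> L'" if "h (g i) \<in> L" for i
      using gm[of i] sK[of "g i"] \<open>K \<inter> L = {}\<close> that by blast
    have "g 0 \<in> K' \<union> L'" by (rule gm)
    then have "h (g 0) \<in> K \<union> L" using sK sL by blast
    moreover have "subseq (h (g i)) (h (g (Suc i)))" for i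
      using that(1) mono unfolding is_inf_tower_def by blast
    moreover have "h (g i) \<in> K \<longrightarrow> h (g (Suc i)) \<in> L" for i
    proof
      assume "h (g i) \<in> K"
      then have "g i \<in> K'" by (rule a)
      then have "g (Suc i) \<in> L'" using that(1) unfolding is_inf_tower_def by blast
      then show "h (g (Suc i)) \<in> L" by (rule sL)
    qed
    moreover have "h (g i) \<in> L \<longrightarrow> h (g (Suc i)) \<in> K" for i
    proof
      assume "h (g i) \<in> L"
      then have "g i \<in> L'" by (rule b)
      then have "g (Suc i) \<in> K'" using that(1) unfolding is_inf_tower_def by blast
      then show "h (g (Suc i)) \<in> K" by (rule sK)
    qed
    ultimately show ?thesis unfolding is_inf_tower_def by blast
  qed
  show "(\<exists>f. is_inf_tower K L f) \<longleftrightarrow> (\<exists>f. is_inf_tower K' L' f)"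
  proof
    assume "\<exists>f. is_inf_tower K L f"
    then obtain f where f: "is_inf_tower K L f" by blast
    obtain g where "\<forall>i. h (g i) = f i \<and> (f i\<in>K \<longrightarrow> g i\<in>K') \<and> (f i\<in>L \<longrightarrow> g i\<in>L') \<and> subseq (g i) (g (Suc i))"
      using lift_seq[OF U0 h0 lift, of f] inf_mem[OF f] f unfolding is_inf_tower_def by blast
    then show "\<exists>f. is_inf_tower K' L' f" using up_inf[OF f] by blast
  next
    assume "\<exists>f. is_inf_tower K' L' f"
    then obtain g where g: "is_inf_tower K' L' g" by blast
    show "\<exists>f. is_inf_tower K L f"
    proof (cases "K \<inter> L = {}")
      case True then show ?thesis using down_inf[OF g] by blast
    next
      case False then show ?thesis using const_i by blast
    qed
  qed
  show "\<forall>r\<ge>1. (\<exists>ws. is_tower K L ws \<and> length ws = r) \<longleftrightarrow> (\<exists>ws. is_tower K' L' ws \<and> length ws = r)"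
  proof (intro allI impI iffI)
    fix r :: nat assume r: "r \<ge> 1"
    {
      assume "\<exists>ws. is_tower K L ws \<and> length ws = r"
      then obtain ws where ws: "is_tower K L ws" "length ws = r" by blast
      define f where "f = (\<lambda>i. ws ! min i (r - 1))"
      have fm: "\<forall>i. f i \<in> K \<union> L" using tower_mem[OF ws(1)] ws(2) r by (auto simp: f_def)
      have fc: "\<forall>i. subseq (f i) (f (Suc i))"
      proof
        fix i show "subseq (f i) (f (Suc i))"
        proof (cases "Suc i < r")
          case True then show ?thesis using ws unfolding is_tower_def f_def by auto
        next
          case False then have "min i (r-1) = r - 1" "min (Suc i) (r-1) = r - 1" by auto
          then show ?thesis by (simp add: f_def)
        qed
      qed
      obtain g where g: "\<forall>i. h (g i) = f i \<and> (f i\<in>K \<longrightarrow> g i\<in>K') \<and> (f i\<in>L \<longrightarrow> g i\<in>L') \<and> subseq (g i) (g (Suc i))"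
        using lift_seq[OF U0 h0 lift fm fc] by blast
      have fi: "f i = ws ! i" if "i < r" for i using that by (simp add: f_def)
      have "is_tower K' L' (map g [0..<r])"
        unfolding is_tower_def
      proof (intro conjI allI impI)
        show "map g [0..<r] \<noteq> []" using r by simp
        have "f 0 \<in> K \<union> L" using fm by blast
        then show "map g [0..<r] ! 0 \<in> K' \<union> L'" using g r by (auto simp: nth_map)
        fix i assume i: "Suc i < length (map g [0..<r])"
        then have i': "Suc i < r" by simp
        have t: "ws ! i \<in> K \<longrightarrow> ws ! Suc i \<in> L" "ws ! i \<in> L \<longrightarrow> ws ! Suc i \<in> K"
          using ws(1) ws(2) i' unfolding is_tower_def by auto
        have e: "map g [0..<r] ! i = g i" "map g [0..<r] ! Suc i = g (Suc i)" using i' by auto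
        show "subseq (map g [0..<r] ! i) (map g [0..<r] ! Suc i)" using g e by simp
        show "map g [0..<r] ! Suc i \<in> L'" if "map g [0..<r] ! i \<in> K'"
          using g e t fi[of i] fi[of "Suc i"] i' sK[of "g i"] that by (metis Suc_lessD)
        show "map g [0..<r] ! Suc i \<in> K'" if "map g [0..<r] ! i \<in> L'"
          using g e t fi[of i] fi[of "Suc i"] i' sL[of "g i"] that by (metis Suc_lessD)
      qed
      then show "\<exists>ws. is_tower K' L' ws \<and> length ws = r" by (intro exI[of _ "map g [0..<r]"]) simp
    }
    {
      assume "\<exists>ws. is_tower K' L' ws \<and> length ws = r"
      then obtain us where us: "is_tower K' L' us" "length us = r" by blast
      show "\<exists>ws. is_tower K L ws \<and> length ws = r"
      proof (cases "K \<inter> L = {}")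
        case False
        then obtain x where "x \<in> K \<inter> L" by blast
        then show ?thesis using const_t[OF _ r] by (intro exI[of _ "replicate r x"]) auto
      next
        case True
        have gm: "us ! i \<in> K' \<union> L'" if "i < r" for i using tower_mem[OF us(1)] us(2) that by blast
        have a: "us ! i \<in> K'" if "h (us ! i) \<in> K" "i < r" for i
          using gm[of i] sL[of "us ! i"] True that by blast
        have b: "us ! i \<in> L'" if "h (us ! i) \<in> L" "i < r" for i
          using gm[of i] sK[of "us ! i"] True that by blast
        have "is_tower K L (map h us)"
          unfolding is_tower_def
        proof (intro conjI allI impI)
          show "map h us \<noteq> []" using us r by auto
          show "map h us ! 0 \<in> K \<union> L" using us r sK sL unfolding is_tower_def by auto
          fix i assume i: "Suc i < length (map h us)"
          then have i': "Suc i < r" using us by simp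
          have t: "subseq (us ! i) (us ! Suc i)" "us ! i \<in> K' \<longrightarrow> us ! Suc i \<in> L'" "us ! i \<in> L' \<longrightarrow> us ! Suc i \<in> K'"
            using us i' unfolding is_tower_def by auto
          show "subseq (map h us ! i) (map h us ! Suc i)" using mono[OF t(1)] i' us by simp
          show "map h us ! Suc i \<in> L" if "map h us ! i \<in> K"
            using t a[of i] sL[of "us ! Suc i"] i' us that by auto
          show "map h us ! Suc i \<in> K" if "map h us ! i \<in> L"
            using t b[of i] sK[of "us ! Suc i"] i' us that by auto
        qed
        then show ?thesis using us by (intro exI[of _ "map h us"]) simp
      qed
    }
  qed
qed



lemma m3s[simp]: "Suc (3*x) mod 3 = (1::nat)" "Suc (3*x) div 3 = (x::nat)"
  "Suc (Suc (3*x)) mod 3 = (2::nat)" "Suc (Suc (3*x)) div 3 = (x::nat)"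
  by presburger+

lemma m3d[simp]: "\<not> (3::nat) dvd Suc (3*x)" "\<not> (3::nat) dvd Suc (Suc (3*x))"
  by presburger+

definition SSet :: "(nat,nat) nfa \<Rightarrow> (nat,nat) nfa \<Rightarrow> nat set" where
  "SSet A B = (\<lambda>a. 3*a) ` nfa_alph A \<union> (\<lambda>q. 3*q+1) ` nfa_states A \<union> (\<lambda>q. 3*q+2) ` nfa_states B"

lemma SSet_props:
  "\<forall>x\<in>SSet A B. x mod 3 = 0 \<longrightarrow> x div 3 \<in> nfa_alph A"
  "\<forall>x\<in>SSet A B. x mod 3 = 1 \<longrightarrow> x div 3 \<in> nfa_states A"
  "\<forall>x\<in>SSet A B. x mod 3 = 2 \<longrightarrow> x div 3 \<in> nfa_states B"
  by (auto simp: SSet_def)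

lemma lift_concrete:
  assumes wfA: "nfa_wf A" and wfB: "nfa_wf B" and al: "nfa_alph A = nfa_alph B"
  and u: "u \<in> lists (SSet A B)" and w: "w \<in> nfa_lang A \<union> nfa_lang B" and sub: "subseq (hh u) w"
  shows "\<exists>u'. u' \<in> lists (SSet A B) \<and> subseq u u' \<and> hh u' = w \<and>
     (w \<in> nfa_lang A \<longrightarrow> u' \<in> dfa_lang (mk A 1 (SSet A B))) \<and>
     (w \<in> nfa_lang B \<longrightarrow> u' \<in> dfa_lang (mk B 2 (SSet A B)))"
proof -
  let ?S = "SSet A B"
  have wl: "w \<in> lists (nfa_alph A)" using w al by (auto simp: nfa_lang_def)
  then have "\<forall>a\<in>set w. 3*a \<in> ?S" by (auto simp: SSet_def)
  from lift_v[OF sub u this] obtain v where v: "v \<in> lists ?S" "subseq u v" "hh v = w" by blast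
  obtain ra where ra: "length ra = length w" "set ra \<subseteq> nfa_states A"
     "w \<in> nfa_lang A \<longrightarrow> run A None w ra \<and> Sset A (last (None # map Some ra)) \<inter> nfa_final A \<noteq> {}"
    using choose_run[OF wfA wl] by blast
  obtain rb where rb: "length rb = length w" "set rb \<subseteq> nfa_states B"
     "w \<in> nfa_lang B \<longrightarrow> run B None w rb \<and> Sset B (last (None # map Some rb)) \<inter> nfa_final B \<noteq> {}"
    using choose_run[OF wfB, of w] wl al by metis
  define ps where "ps = zip (map (\<lambda>r. 3*r+1) ra) (map (\<lambda>r. 3*r+2) rb)"
  have pset: "\<forall>p\<in>set ps. fst p \<in> ?S \<and> snd p \<in> ?S"
  proof
    fix p assume "p \<in> set ps"
    then have pp: "(fst p, snd p) \<in> set (zip (map (\<lambda>r. 3*r+1) ra) (map (\<lambda>r. 3*r+2) rb))"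
      unfolding ps_def by simp
    have "fst p \<in> set (map (\<lambda>r. 3*r+1) ra)" "snd p \<in> set (map (\<lambda>r. 3*r+2) rb)"
      using set_zip_leftD[OF pp] set_zip_rightD[OF pp] by blast+
    then show "fst p \<in> ?S \<and> snd p \<in> ?S" using ra(2) rb(2) by (auto simp: SSet_def)
  qed
  have pmod: "\<forall>p\<in>set ps. fst p mod 3 \<noteq> 0 \<and> snd p mod 3 \<noteq> 0"
  proof
    fix p assume "p \<in> set ps"
    then have pp: "(fst p, snd p) \<in> set (zip (map (\<lambda>r. 3*r+1) ra) (map (\<lambda>r. 3*r+2) rb))"
      unfolding ps_def by simp
    have "fst p \<in> set (map (\<lambda>r. 3*r+1) ra)" "snd p \<in> set (map (\<lambda>r. 3*r+2) rb)"
      using set_zip_leftD[OF pp] set_zip_rightD[OF pp] by blast+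
    then show "fst p mod 3 \<noteq> 0 \<and> snd p mod 3 \<noteq> 0" by auto
  qed
  have lr: "length ra = length rb" using ra(1) rb(1) by simp
  have g1: "list_all2 (good A 1) ps ra" unfolding ps_def
    by (rule la2a[OF lr]) (simp del: Suc_eq_plus1 add: good1[of A, simplified])
  have g2: "list_all2 (good B 2) ps rb" unfolding ps_def
    by (rule la2b[OF lr]) (simp del: Suc_eq_plus1 add: good2[of B, simplified])
  have "ins ps v \<in> lists ?S" by (rule ins_lists[OF v(1) pset])
  moreover have "subseq u (ins ps v)" using v(2) ins_subseq[of v ps] by (rule subseq_order.order_trans)
  moreover have "hh (ins ps v) = w" using ins_hh[OF pmod] v(3) by simp
  moreover have "w \<in> nfa_lang A \<longrightarrow> ins ps v \<in> dfa_lang (mk A 1 ?S)"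
    using accept_ins[OF v(1) v(3) g1 pset] ra(3) SSet_props(2) by blast
  moreover have "w \<in> nfa_lang B \<longrightarrow> ins ps v \<in> dfa_lang (mk B 2 ?S)"
    using accept_ins[OF v(1) v(3) g2 pset] rb(3) SSet_props(3) by blast
  ultimately show ?thesis by blast
qed

theorem theorem12:
  shows "\<exists>C::nat. \<forall>(A::(nat, nat) nfa) (B::(nat, nat) nfa) (n::nat) (m::nat).
    nfa_wf A \<and> nfa_wf B \<and> nfa_alph A = nfa_alph B \<and> card (nfa_alph A) = m \<and>
    card (nfa_states A) \<le> n \<and> card (nfa_states B) \<le> n \<longrightarrow>
    (\<exists>(A'::(nat, nat) dfa) (B'::(nat, nat) dfa).
       dfa_wf A' \<and> dfa_wf B' \<and> dfa_alph A' = dfa_alph B' \<and>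
       card (dfa_states A') \<le> C * n^2 \<and> card (dfa_states B') \<le> C * n^2 \<and>
       card (dfa_alph A') \<le> C * (m + n) \<and>
       (\<forall>r \<ge> 1.
          (\<exists>ws. is_tower (nfa_lang A) (nfa_lang B) ws \<and> length ws = r) \<longleftrightarrow>
          (\<exists>ws. is_tower (dfa_lang A') (dfa_lang B') ws \<and> length ws = r)) \<and>
       ((\<exists>f. is_inf_tower (nfa_lang A) (nfa_lang B) f) \<longleftrightarrow>
        (\<exists>f. is_inf_tower (dfa_lang A') (dfa_lang B') f)))"
proof (intro exI[of _ 5] allI impI)
  fix A B :: "(nat,nat) nfa" and n m :: nat
  assume H: "nfa_wf A \<and> nfa_wf B \<and> nfa_alph A = nfa_alph B \<and> card (nfa_alph A) = m \<and>
    card (nfa_states A) \<le> n \<and> card (nfa_states B) \<le> n"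
  then have wfA: "nfa_wf A" and wfB: "nfa_wf B" and al: "nfa_alph A = nfa_alph B"
    and cm: "card (nfa_alph A) = m" and cA: "card (nfa_states A) \<le> n" and cB: "card (nfa_states B) \<le> n"
    by auto
  let ?S = "SSet A B"
  let ?A = "mk A 1 ?S" and ?B = "mk B 2 ?S"
  have fA: "finite (nfa_states A)" "nfa_states A \<noteq> {}" "finite (nfa_alph A)" using wfA by (auto simp: nfa_wf_def)
  have fB: "finite (nfa_states B)" "nfa_states B \<noteq> {}" using wfB by (auto simp: nfa_wf_def)
  have finS: "finite ?S" using fA fB by (simp add: SSet_def)
  have "card (nfa_states A) > 0" using fA by (simp add: card_gt_0_iff)
  then have n1: "1 \<le> n" using cA by linarith
  have wA': "dfa_wf ?A" by (rule mk_wf[OF wfA finS]) (use SSet_props(2) in simp)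
  have wB': "dfa_wf ?B" by (rule mk_wf[OF wfB finS]) (use SSet_props(3) in simp)
  have cst: "card (dfa_states (mk N k ?S)) \<le> 5 * n^2" if "finite (nfa_states N)" "card (nfa_states N) \<le> n" for N :: "(nat,nat) nfa" and k
  proof -
    let ?c = "card (nfa_states N)"
    have "card (dfa_states (mk N k ?S)) \<le> card (St N)" unfolding mk_def
      using card_image_le[of "St N" to_nat] that(1) by (simp add: St_def)
    also have "\<dots> \<le> 2 + ?c + Suc ?c * ?c" by (rule card_St[OF that(1)])
    also have "\<dots> \<le> 2 + n + Suc n * n" using that(2) by (intro add_mono mult_mono) auto
    also have "\<dots> \<le> 5 * n^2"
    proof -
      have a: "n \<le> n * n" using n1 by simp
      have b: "1 \<le> n * n" using n1 by simp
      have "2 + n + Suc n * n = 2 + n + n + n * n" by simp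
      then show ?thesis using a b unfolding power2_eq_square by linarith
    qed
    finally show ?thesis .
  qed
  have ca: "card ?S \<le> 5 * (m + n)"
  proof -
    have "card ?S \<le> card ((\<lambda>a. 3*a) ` nfa_alph A \<union> (\<lambda>q. 3*q+1) ` nfa_states A) + card ((\<lambda>q. 3*q+2) ` nfa_states B)"
      unfolding SSet_def by (rule card_Un_le)
    also have "\<dots> \<le> card ((\<lambda>a. 3*a) ` nfa_alph A) + card ((\<lambda>q. 3*q+1) ` nfa_states A) + card ((\<lambda>q. 3*q+2) ` nfa_states B)"
      using card_Un_le by simp
    also have "\<dots> \<le> m + n + n" using cm cA cB card_image_le fA fB
      by (intro add_mono) (auto intro: le_trans[OF card_image_le])
    finally show ?thesis by simp
  qed
  have tw: "(\<forall>r\<ge>1. (\<exists>ws. is_tower (nfa_lang A) (nfa_lang B) ws \<and> length ws = r) \<longleftrightarrow>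
          (\<exists>ws. is_tower (dfa_lang ?A) (dfa_lang ?B) ws \<and> length ws = r)) \<and>
       ((\<exists>f. is_inf_tower (nfa_lang A) (nfa_lang B) f) \<longleftrightarrow>
        (\<exists>f. is_inf_tower (dfa_lang ?A) (dfa_lang ?B) f))"
  proof -
    have sK: "\<And>u. u \<in> dfa_lang ?A \<Longrightarrow> hh u \<in> nfa_lang A"
      by (rule sound[OF _ SSet_props(1)])
    have sL: "\<And>u. u \<in> dfa_lang ?B \<Longrightarrow> hh u \<in> nfa_lang B"
      using sound[of _ B 2 "SSet A B"] SSet_props(1)[of A B] al by simp
    have mono: "\<And>u v. subseq u v \<Longrightarrow> subseq (hh u) (hh v)"
      unfolding hh_def by (intro subseq_map subseq_filter)
    have U0: "[] \<in> lists ?S" by simp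
    have h0: "hh [] = []" by simp
    have lift: "\<And>u w. u \<in> lists ?S \<Longrightarrow> w \<in> nfa_lang A \<union> nfa_lang B \<Longrightarrow> subseq (hh u) w \<Longrightarrow>
     \<exists>u'. u' \<in> lists ?S \<and> subseq u u' \<and> hh u' = w \<and> (w\<in>nfa_lang A \<longrightarrow> u'\<in>dfa_lang ?A) \<and> (w\<in>nfa_lang B \<longrightarrow> u'\<in>dfa_lang ?B)"
      using lift_concrete[OF wfA wfB al] by blast
    have KL: "nfa_lang A \<inter> nfa_lang B \<noteq> {} \<Longrightarrow> dfa_lang ?A \<inter> dfa_lang ?B \<noteq> {}"
    proof -
      assume "nfa_lang A \<inter> nfa_lang B \<noteq> {}"
      then obtain w where "w \<in> nfa_lang A" "w \<in> nfa_lang B" by blast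
      then show ?thesis using lift[OF U0, of w] by auto
    qed
    show ?thesis using towers_abs[OF sK sL mono U0 h0 lift KL] by blast
  qed
  show "\<exists>(A'::(nat, nat) dfa) (B'::(nat, nat) dfa).
       dfa_wf A' \<and> dfa_wf B' \<and> dfa_alph A' = dfa_alph B' \<and>
       card (dfa_states A') \<le> 5 * n^2 \<and> card (dfa_states B') \<le> 5 * n^2 \<and>
       card (dfa_alph A') \<le> 5 * (m + n) \<and>
       (\<forall>r \<ge> 1.
          (\<exists>ws. is_tower (nfa_lang A) (nfa_lang B) ws \<and> length ws = r) \<longleftrightarrow>
          (\<exists>ws. is_tower (dfa_lang A') (dfa_lang B') ws \<and> length ws = r)) \<and>
       ((\<exists>f. is_inf_tower (nfa_lang A) (nfa_lang B) f) \<longleftrightarrow>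
        (\<exists>f. is_inf_tower (dfa_lang A') (dfa_lang B') f))"
    apply (rule exI[of _ ?A], rule exI[of _ ?B])
    using wA' wB' cst[OF fA(1) cA] cst[OF fB(1) cB] ca tw by (simp add: mk_def)
qed

end
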